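(* Let $k,l\ge1$ with $k\ne l$ and $1\le r\le 4kl$. Let $\overline{\mathcal{B}}(2k,2l;r)$ be the subset of $\mathcal{B}(2k,2l;r)$ consisting of boards whose board partition $(\lambda_1,\lambda_2,\lambda_3,\lambda_4)$ satisfies: (i) $\lambda_1\ge\lambda_i$ for all $i>1$; (ii) if $\lambda_1=\lambda_2$ then $\lambda_3\ge\lambda_4$; (iii) if $\lambda_1=\lambda_3$ then $\lambda_2\ge\lambda_4$; (iv) if $\lambda_1=\lambda_4$ then $\lambda_2\ge\lambda_3$. Then: (1) $\overline{\mathcal{B}}(2k,2l;r)$ is a disjoint union of sets each consisting of all boards in $\mathcal{B}(2k,2l;r)$ with some fixed board partition; (2) every board of $\mathcal{B}(2k,2l;r)$ is equivalent under $\langle H,V\rangle$ to some board of $\overline{\mathcal{B}}(2k,2l;r)$; (3) if two boards of $\overline{\mathcal{B}}(2k,2l;r)$ are equivalent under $\langle H,V\rangle$, they have the same board partition.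
   Context: A $2k\times 2l$ grid ($2k$ rows numbered top to bottom, $2l$ columns numbered left to right) of unit cells; $\mathcal{B}(2k,2l;r)$ is the set of boards, i.e. subsets of exactly $r$ blocked cells. The symmetry group is $\langle H,V\rangle=\{R_0,H,V,R_{180}\}$, where $H$ is reflection across the horizontal midline, $V$ reflection across the vertical midline, $R_{180}$ rotation by 180 degrees; boards are equivalent if some element maps one to the other. The grid is divided into four $k\times l$ quadrants: $Q_1$ = rows $1..k$, cols $1..l$; $Q_2$ = rows $1..k$, cols $l+1..2l$; $Q_3$ = rows $k+1..2k$, cols $l+1..2l$; $Q_4$ = rows $k+1..2k$, cols $1..l$. The board partition is $(\lambda_1,\lambda_2,\lambda_3,\lambda_4)$ with $\lambda_i$ the number of blocked cells in $Q_i$. *)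

theory Defs
  imports Main
begin

(* Cells are pairs (row, column), rows 1..2k top to bottom, columns 1..2l left to right. *)
definition grid :: "nat \<Rightarrow> nat \<Rightarrow> (nat \<times> nat) set" where
  "grid k l = {1..2*k} \<times> {1..2*l}"

definition boards :: "nat \<Rightarrow> nat \<Rightarrow> nat \<Rightarrow> (nat \<times> nat) set set" where
  "boards k l r = {b. b \<subseteq> grid k l \<and> card b = r}"

definition Hrefl :: "nat \<Rightarrow> nat \<Rightarrow> nat \<times> nat \<Rightarrow> nat \<times> nat" where
  "Hrefl k l c = (2*k + 1 - fst c, snd c)"

definition Vrefl :: "nat \<Rightarrow> nat \<Rightarrow> nat \<times> nat \<Rightarrow> nat \<times> nat" where
  "Vrefl k l c = (fst c, 2*l + 1 - snd c)"

definition Rot180 :: "nat \<Rightarrow> nat \<Rightarrow> nat \<times> nat \<Rightarrow> nat \<times> nat" where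
  "Rot180 k l c = (2*k + 1 - fst c, 2*l + 1 - snd c)"

definition symgroup :: "nat \<Rightarrow> nat \<Rightarrow> (nat \<times> nat \<Rightarrow> nat \<times> nat) set" where
  "symgroup k l = {id, Hrefl k l, Vrefl k l, Rot180 k l}"

definition equivalent :: "nat \<Rightarrow> nat \<Rightarrow> (nat \<times> nat) set \<Rightarrow> (nat \<times> nat) set \<Rightarrow> bool" where
  "equivalent k l b1 b2 \<longleftrightarrow> (\<exists>g\<in>symgroup k l. g ` b1 = b2)"

definition Q1 :: "nat \<Rightarrow> nat \<Rightarrow> (nat \<times> nat) set" where
  "Q1 k l = {1..k} \<times> {1..l}"
definition Q2 :: "nat \<Rightarrow> nat \<Rightarrow> (nat \<times> nat) set" where
  "Q2 k l = {1..k} \<times> {l+1..2*l}"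
definition Q3 :: "nat \<Rightarrow> nat \<Rightarrow> (nat \<times> nat) set" where
  "Q3 k l = {k+1..2*k} \<times> {l+1..2*l}"
definition Q4 :: "nat \<Rightarrow> nat \<Rightarrow> (nat \<times> nat) set" where
  "Q4 k l = {k+1..2*k} \<times> {1..l}"

definition board_partition :: "nat \<Rightarrow> nat \<Rightarrow> (nat \<times> nat) set \<Rightarrow> nat \<times> nat \<times> nat \<times> nat" where
  "board_partition k l b =
     (card (b \<inter> Q1 k l), card (b \<inter> Q2 k l), card (b \<inter> Q3 k l), card (b \<inter> Q4 k l))"

definition canonical_partition :: "nat \<times> nat \<times> nat \<times> nat \<Rightarrow> bool" where
  "canonical_partition p = (case p of (l1, l2, l3, l4) \<Rightarrow>
     l1 \<ge> l2 \<and> l1 \<ge> l3 \<and> l1 \<ge> l4 \<and>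
     (l1 = l2 \<longrightarrow> l3 \<ge> l4) \<and>
     (l1 = l3 \<longrightarrow> l2 \<ge> l4) \<and>
     (l1 = l4 \<longrightarrow> l2 \<ge> l3))"

definition boards_bar :: "nat \<Rightarrow> nat \<Rightarrow> nat \<Rightarrow> (nat \<times> nat) set set" where
  "boards_bar k l r = {b \<in> boards k l r. canonical_partition (board_partition k l b)}"

end

theory Submission
  imports Defs
begin

lemma img_int: "(\<forall>x\<in>b. g x \<in> A \<longleftrightarrow> x \<in> B) \<Longrightarrow> g ` b \<inter> A = g ` (b \<inter> B)"
  by auto

lemma card_img_int:
  assumes "inj_on g G" "b \<subseteq> G" "\<forall>x\<in>G. g x \<in> A \<longleftrightarrow> x \<in> B"
  shows "card (g ` b \<inter> A) = card (b \<inter> B)"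
proof -
  have "g ` b \<inter> A = g ` (b \<inter> B)" using assms(2,3) by (intro img_int) blast
  moreover have "inj_on g (b \<inter> B)" using assms(1,2) by (meson inf.coboundedI1 inj_on_subset)
  ultimately show ?thesis by (simp add: card_image)
qed

lemma inj_H: "inj_on (Hrefl k l) (grid k l)"
  by (auto simp: inj_on_def Hrefl_def grid_def)
lemma inj_V: "inj_on (Vrefl k l) (grid k l)"
  by (auto simp: inj_on_def Vrefl_def grid_def)
lemma inj_R: "inj_on (Rot180 k l) (grid k l)"
  by (auto simp: inj_on_def Rot180_def grid_def)

lemma sub_H: "Hrefl k l ` grid k l \<subseteq> grid k l"
  by (auto simp: Hrefl_def grid_def)
lemma sub_V: "Vrefl k l ` grid k l \<subseteq> grid k l"
  by (auto simp: Vrefl_def grid_def)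
lemma sub_R: "Rot180 k l ` grid k l \<subseteq> grid k l"
  by (auto simp: Rot180_def grid_def)

lemma memH:
  "\<forall>x\<in>grid k l. Hrefl k l x \<in> Q1 k l \<longleftrightarrow> x \<in> Q4 k l"
  "\<forall>x\<in>grid k l. Hrefl k l x \<in> Q2 k l \<longleftrightarrow> x \<in> Q3 k l"
  "\<forall>x\<in>grid k l. Hrefl k l x \<in> Q3 k l \<longleftrightarrow> x \<in> Q2 k l"
  "\<forall>x\<in>grid k l. Hrefl k l x \<in> Q4 k l \<longleftrightarrow> x \<in> Q1 k l"
  by (auto simp: Hrefl_def grid_def Q1_def Q2_def Q3_def Q4_def)

lemma memV:
  "\<forall>x\<in>grid k l. Vrefl k l x \<in> Q1 k l \<longleftrightarrow> x \<in> Q2 k l"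
  "\<forall>x\<in>grid k l. Vrefl k l x \<in> Q2 k l \<longleftrightarrow> x \<in> Q1 k l"
  "\<forall>x\<in>grid k l. Vrefl k l x \<in> Q3 k l \<longleftrightarrow> x \<in> Q4 k l"
  "\<forall>x\<in>grid k l. Vrefl k l x \<in> Q4 k l \<longleftrightarrow> x \<in> Q3 k l"
  by (auto simp: Vrefl_def grid_def Q1_def Q2_def Q3_def Q4_def)

lemma memR:
  "\<forall>x\<in>grid k l. Rot180 k l x \<in> Q1 k l \<longleftrightarrow> x \<in> Q3 k l"
  "\<forall>x\<in>grid k l. Rot180 k l x \<in> Q2 k l \<longleftrightarrow> x \<in> Q4 k l"
  "\<forall>x\<in>grid k l. Rot180 k l x \<in> Q3 k l \<longleftrightarrow> x \<in> Q1 k l"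
  "\<forall>x\<in>grid k l. Rot180 k l x \<in> Q4 k l \<longleftrightarrow> x \<in> Q2 k l"
  by (auto simp: Rot180_def grid_def Q1_def Q2_def Q3_def Q4_def)

lemma bpH: "b \<subseteq> grid k l \<Longrightarrow> board_partition k l (Hrefl k l ` b) =
   (card (b \<inter> Q4 k l), card (b \<inter> Q3 k l), card (b \<inter> Q2 k l), card (b \<inter> Q1 k l))"
  unfolding board_partition_def using card_img_int[OF inj_H] memH by simp

lemma bpV: "b \<subseteq> grid k l \<Longrightarrow> board_partition k l (Vrefl k l ` b) =
   (card (b \<inter> Q2 k l), card (b \<inter> Q1 k l), card (b \<inter> Q4 k l), card (b \<inter> Q3 k l))"
  unfolding board_partition_def using card_img_int[OF inj_V] memV by simp

lemma bpR: "b \<subseteq> grid k l \<Longrightarrow> board_partition k l (Rot180 k l ` b) =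
   (card (b \<inter> Q3 k l), card (b \<inter> Q4 k l), card (b \<inter> Q1 k l), card (b \<inter> Q2 k l))"
  unfolding board_partition_def using card_img_int[OF inj_R] memR by simp

lemma boards_img:
  assumes "b \<in> boards k l r" "g \<in> symgroup k l"
  shows "g ` b \<in> boards k l r"
proof -
  have bG: "b \<subseteq> grid k l" using assms(1) by (simp add: boards_def)
  have "inj_on g (grid k l) \<and> g ` grid k l \<subseteq> grid k l"
    using assms(2) inj_H[of k l] inj_V[of k l] inj_R[of k l] sub_H[of k l] sub_V[of k l] sub_R[of k l]
    unfolding symgroup_def by (elim insertE emptyE) simp_all
  then have "inj_on g b" "g ` b \<subseteq> grid k l" using bG by (auto intro: inj_on_subset)
  then show ?thesis using assms(1)
    by (simp add: boards_def card_image)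
qed

lemma canon_exists:
  "canonical_partition (a,b,c,d) \<or> canonical_partition (d,c,b,a) \<or>
   canonical_partition (b,a,d,c) \<or> canonical_partition (c,d,a,b)"
  unfolding canonical_partition_def by simp arith

lemma canon_H: "canonical_partition (a,b,c,d) \<Longrightarrow> canonical_partition (d,c,b,a) \<Longrightarrow> (a,b,c,d) = (d,c,b,a)"
  unfolding canonical_partition_def by auto
lemma canon_V: "canonical_partition (a,b,c,d) \<Longrightarrow> canonical_partition (b,a,d,c) \<Longrightarrow> (a,b,c,d) = (b,a,d,c)"
  unfolding canonical_partition_def by auto
lemma canon_R: "canonical_partition (a,b,c,d) \<Longrightarrow> canonical_partition (c,d,a,b) \<Longrightarrow> (a,b,c,d) = (c,d,a,b)"
  unfolding canonical_partition_def by auto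

theorem theorem4p5:
  fixes k l r :: nat
  assumes "k \<ge> 1" and "l \<ge> 1" and "k \<noteq> l" and "1 \<le> r" and "r \<le> 4*k*l"
  shows "(\<exists>S. boards_bar k l r = (\<Union>p\<in>S. {b \<in> boards k l r. board_partition k l b = p})
              \<and> (\<forall>p\<in>S. \<forall>q\<in>S. p \<noteq> q \<longrightarrow>
                   {b \<in> boards k l r. board_partition k l b = p} \<inter>
                   {b \<in> boards k l r. board_partition k l b = q} = {}))
       \<and> (\<forall>b\<in>boards k l r. \<exists>b'\<in>boards_bar k l r. equivalent k l b b')
       \<and> (\<forall>b1\<in>boards_bar k l r. \<forall>b2\<in>boards_bar k l r.
            equivalent k l b1 b2 \<longrightarrow> board_partition k l b1 = board_partition k l b2)"
proof (intro conjI ballI impI)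
  show "\<exists>S. boards_bar k l r = (\<Union>p\<in>S. {b \<in> boards k l r. board_partition k l b = p})
              \<and> (\<forall>p\<in>S. \<forall>q\<in>S. p \<noteq> q \<longrightarrow>
                   {b \<in> boards k l r. board_partition k l b = p} \<inter>
                   {b \<in> boards k l r. board_partition k l b = q} = {})"
    by (rule exI[of _ "{p. canonical_partition p}"]) (auto simp: boards_bar_def)
next
  fix b assume b: "b \<in> boards k l r"
  have bG: "b \<subseteq> grid k l" using b by (simp add: boards_def)
  have ids: "id \<in> symgroup k l" "Hrefl k l \<in> symgroup k l" "Vrefl k l \<in> symgroup k l"
     "Rot180 k l \<in> symgroup k l" by (auto simp: symgroup_def)
  have key: "\<And>g. g \<in> symgroup k l \<Longrightarrow> canonical_partition (board_partition k l (g ` b))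
     \<Longrightarrow> \<exists>b'\<in>boards_bar k l r. equivalent k l b b'"
  proof -
    fix g assume g: "g \<in> symgroup k l" and c: "canonical_partition (board_partition k l (g ` b))"
    have "g ` b \<in> boards_bar k l r" using boards_img[OF b g] c by (simp add: boards_bar_def)
    moreover have "equivalent k l b (g ` b)" using g unfolding equivalent_def by blast
    ultimately show "\<exists>b'\<in>boards_bar k l r. equivalent k l b b'" by blast
  qed
  have idb: "id ` b = b" by simp
  show "\<exists>b'\<in>boards_bar k l r. equivalent k l b b'"
    using canon_exists[of "card (b \<inter> Q1 k l)" "card (b \<inter> Q2 k l)" "card (b \<inter> Q3 k l)" "card (b \<inter> Q4 k l)"]
  proof (elim disjE)
    assume "canonical_partition (card (b \<inter> Q1 k l), card (b \<inter> Q2 k l), card (b \<inter> Q3 k l), card (b \<inter> Q4 k l))"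
    then show ?thesis using key[OF ids(1)] unfolding idb board_partition_def by blast
  next
    assume "canonical_partition (card (b \<inter> Q4 k l), card (b \<inter> Q3 k l), card (b \<inter> Q2 k l), card (b \<inter> Q1 k l))"
    then show ?thesis using key[OF ids(2)] unfolding bpH[OF bG] by blast
  next
    assume "canonical_partition (card (b \<inter> Q2 k l), card (b \<inter> Q1 k l), card (b \<inter> Q4 k l), card (b \<inter> Q3 k l))"
    then show ?thesis using key[OF ids(3)] unfolding bpV[OF bG] by blast
  next
    assume "canonical_partition (card (b \<inter> Q3 k l), card (b \<inter> Q4 k l), card (b \<inter> Q1 k l), card (b \<inter> Q2 k l))"
    then show ?thesis using key[OF ids(4)] unfolding bpR[OF bG] by blast
  qed
next
  fix b1 b2 assume b1: "b1 \<in> boards_bar k l r" and b2: "b2 \<in> boards_bar k l r"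
    and e: "equivalent k l b1 b2"
  have bG: "b1 \<subseteq> grid k l" using b1 by (simp add: boards_bar_def boards_def)
  have c1: "canonical_partition (board_partition k l b1)"
   and c2: "canonical_partition (board_partition k l b2)"
    using b1 b2 by (auto simp: boards_bar_def)
  from e obtain g where g: "g \<in> symgroup k l" "g ` b1 = b2" by (auto simp: equivalent_def)
  obtain a b c d where p1: "board_partition k l b1 = (a,b,c,d)" by (metis prod.exhaust)
  have p1': "card (b1 \<inter> Q1 k l) = a" "card (b1 \<inter> Q2 k l) = b" "card (b1 \<inter> Q3 k l) = c" "card (b1 \<inter> Q4 k l) = d"
    using p1 by (simp_all add: board_partition_def)
  from g(1) show "board_partition k l b1 = board_partition k l b2"
    unfolding symgroup_def
  proof (elim insertE emptyE)
    assume "g = id" then show ?thesis using g by simp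
  next
    assume "g = Hrefl k l"
    then have p2: "board_partition k l b2 = (d,c,b,a)" using g bpH[OF bG] p1' by (simp add: board_partition_def)
    show ?thesis using c1 c2 unfolding p1 p2 by (rule canon_H)
  next
    assume "g = Vrefl k l"
    then have p2: "board_partition k l b2 = (b,a,d,c)" using g bpV[OF bG] p1' by (simp add: board_partition_def)
    show ?thesis using c1 c2 unfolding p1 p2 by (rule canon_V)
  next
    assume "g = Rot180 k l"
    then have p2: "board_partition k l b2 = (c,d,a,b)" using g bpR[OF bG] p1' by (simp add: board_partition_def)
    show ?thesis using c1 c2 unfolding p1 p2 by (rule canon_R)
  qed
qed

end
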